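(* Let $T=(T,\eta,\mu)$ be a monad on a category $\mathbb{C}$ such that for every object $X$ the pair $\eta_{TX},T\eta_X:TX\to TTX$ has an equalizer $\theta_X:DX\to TX$, and let $D$ be the associated monad. Then $D$ is idempotent if and only if for every object $X$ the morphism $T\theta_X:TDX\to TTX$ is monic. In particular, $D$ is idempotent whenever $T$ maps regular monomorphisms to monomorphisms.
   Context: The monad $D$: for $g:Y\to Z$ in $\mathbb{C}$, $Dg:DY\to DZ$ is the unique morphism with $\theta_Z\circ Dg=Tg\circ\theta_Y$; the unit $e_X:X\to DX$ is the unique morphism with $\theta_X\circ e_X=\eta_X$; the multiplication $m_X:DDX\to DX$ is the unique morphism with $\theta_X\circ m_X=\mu_X\circ T\theta_X\circ\theta_{DX}$. (Equivalently, morphisms $X\to DY$ correspond, via composition with $\theta_Y$, to morphisms $f^\sharp:X\to TY$ with $\eta_{TY}\circ f^\sharp=T\eta_Y\circ f^\sharp$, and the Kleisli category of $D$ is the corresponding subcategory of $\mathsf{Kl}(T)$.) A monad is idempotent if its multiplication is a natural isomorphism. A regular monomorphism is a morphism which is an equalizer of some pair of morphisms. *)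

theory Defs
  imports Main
begin

text \<open>Categories, given explicitly by objects, arrows, domain, codomain, identities
and composition (Comp g f means g after f, defined when Cod f = Dom g).\<close>

record ('o, 'a) cat =
  Obj  :: "'o set"
  Arr  :: "'a set"
  Dom  :: "'a \<Rightarrow> 'o"
  Cod  :: "'a \<Rightarrow> 'o"
  Id   :: "'o \<Rightarrow> 'a"
  Comp :: "'a \<Rightarrow> 'a \<Rightarrow> 'a"

definition hom :: "('o, 'a) cat \<Rightarrow> 'o \<Rightarrow> 'o \<Rightarrow> 'a set" where
  "hom C X Y = {f \<in> Arr C. Dom C f = X \<and> Cod C f = Y}"

definition category :: "('o, 'a) cat \<Rightarrow> bool" where
  "category C \<longleftrightarrow>
     (\<forall>f \<in> Arr C. Dom C f \<in> Obj C \<and> Cod C f \<in> Obj C) \<and>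
     (\<forall>X \<in> Obj C. Id C X \<in> hom C X X) \<and>
     (\<forall>f \<in> Arr C. \<forall>g \<in> Arr C. Cod C f = Dom C g \<longrightarrow>
         Comp C g f \<in> hom C (Dom C f) (Cod C g)) \<and>
     (\<forall>f \<in> Arr C. \<forall>g \<in> Arr C. \<forall>h \<in> Arr C.
         Cod C f = Dom C g \<longrightarrow> Cod C g = Dom C h \<longrightarrow>
         Comp C h (Comp C g f) = Comp C (Comp C h g) f) \<and>
     (\<forall>f \<in> Arr C. Comp C (Id C (Cod C f)) f = f \<and> Comp C f (Id C (Dom C f)) = f)"

definition mono :: "('o, 'a) cat \<Rightarrow> 'a \<Rightarrow> bool" where
  "mono C f \<longleftrightarrow> f \<in> Arr C \<and>
     (\<forall>g \<in> Arr C. \<forall>h \<in> Arr C. Cod C g = Dom C f \<longrightarrow> Cod C h = Dom C f \<longrightarrow>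
        Dom C g = Dom C h \<longrightarrow> Comp C f g = Comp C f h \<longrightarrow> g = h)"

definition iso :: "('o, 'a) cat \<Rightarrow> 'a \<Rightarrow> bool" where
  "iso C f \<longleftrightarrow> f \<in> Arr C \<and>
     (\<exists>g \<in> hom C (Cod C f) (Dom C f).
        Comp C g f = Id C (Dom C f) \<and> Comp C f g = Id C (Cod C f))"

definition is_equalizer :: "('o, 'a) cat \<Rightarrow> 'a \<Rightarrow> 'a \<Rightarrow> 'a \<Rightarrow> bool" where
  "is_equalizer C f g e \<longleftrightarrow>
     f \<in> Arr C \<and> g \<in> Arr C \<and> Dom C f = Dom C g \<and> Cod C f = Cod C g \<and>
     e \<in> Arr C \<and> Cod C e = Dom C f \<and> Comp C f e = Comp C g e \<and>
     (\<forall>h \<in> Arr C. Cod C h = Dom C f \<longrightarrow> Comp C f h = Comp C g h \<longrightarrow>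
        (\<exists>!k. k \<in> hom C (Dom C h) (Dom C e) \<and> Comp C e k = h))"

definition regular_mono :: "('o, 'a) cat \<Rightarrow> 'a \<Rightarrow> bool" where
  "regular_mono C e \<longleftrightarrow> (\<exists>f g. is_equalizer C f g e)"

definition endofunctor :: "('o, 'a) cat \<Rightarrow> ('o \<Rightarrow> 'o) \<Rightarrow> ('a \<Rightarrow> 'a) \<Rightarrow> bool" where
  "endofunctor C TO TA \<longleftrightarrow>
     (\<forall>X \<in> Obj C. TO X \<in> Obj C) \<and>
     (\<forall>f \<in> Arr C. TA f \<in> hom C (TO (Dom C f)) (TO (Cod C f))) \<and>
     (\<forall>X \<in> Obj C. TA (Id C X) = Id C (TO X)) \<and>
     (\<forall>f \<in> Arr C. \<forall>g \<in> Arr C. Cod C f = Dom C g \<longrightarrow>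
        TA (Comp C g f) = Comp C (TA g) (TA f))"

definition monad ::
  "('o, 'a) cat \<Rightarrow> ('o \<Rightarrow> 'o) \<Rightarrow> ('a \<Rightarrow> 'a) \<Rightarrow> ('o \<Rightarrow> 'a) \<Rightarrow> ('o \<Rightarrow> 'a) \<Rightarrow> bool" where
  "monad C TO TA eta mu \<longleftrightarrow>
     category C \<and> endofunctor C TO TA \<and>
     (\<forall>X \<in> Obj C. eta X \<in> hom C X (TO X)) \<and>
     (\<forall>X \<in> Obj C. mu X \<in> hom C (TO (TO X)) (TO X)) \<and>
     (\<forall>f \<in> Arr C. Comp C (eta (Cod C f)) f = Comp C (TA f) (eta (Dom C f))) \<and>
     (\<forall>f \<in> Arr C. Comp C (mu (Cod C f)) (TA (TA f)) = Comp C (TA f) (mu (Dom C f))) \<and>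
     (\<forall>X \<in> Obj C. Comp C (mu X) (TA (mu X)) = Comp C (mu X) (mu (TO X))) \<and>
     (\<forall>X \<in> Obj C. Comp C (mu X) (eta (TO X)) = Id C (TO X)) \<and>
     (\<forall>X \<in> Obj C. Comp C (mu X) (TA (eta X)) = Id C (TO X))"

text \<open>The associated monad D, given a choice theta of equalizers
theta X : DX \<rightarrow> TX of eta_{TX}, T eta_X.  DX is the domain of theta X.\<close>

definition DO :: "('o, 'a) cat \<Rightarrow> ('o \<Rightarrow> 'a) \<Rightarrow> 'o \<Rightarrow> 'o" where
  "DO C theta X = Dom C (theta X)"

definition DA :: "('o, 'a) cat \<Rightarrow> ('a \<Rightarrow> 'a) \<Rightarrow> ('o \<Rightarrow> 'a) \<Rightarrow> 'a \<Rightarrow> 'a" where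
  "DA C TA theta g = (THE k. k \<in> hom C (DO C theta (Dom C g)) (DO C theta (Cod C g)) \<and>
       Comp C (theta (Cod C g)) k = Comp C (TA g) (theta (Dom C g)))"

definition D_unit :: "('o, 'a) cat \<Rightarrow> ('o \<Rightarrow> 'a) \<Rightarrow> ('o \<Rightarrow> 'a) \<Rightarrow> 'o \<Rightarrow> 'a" where
  "D_unit C eta theta X = (THE k. k \<in> hom C X (DO C theta X) \<and>
       Comp C (theta X) k = eta X)"

definition D_mult ::
  "('o, 'a) cat \<Rightarrow> ('a \<Rightarrow> 'a) \<Rightarrow> ('o \<Rightarrow> 'a) \<Rightarrow> ('o \<Rightarrow> 'a) \<Rightarrow> 'o \<Rightarrow> 'a" where
  "D_mult C TA mu theta X = (THE k. k \<in> hom C (DO C theta (DO C theta X)) (DO C theta X) \<and>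
       Comp C (theta X) k =
         Comp C (mu X) (Comp C (TA (theta X)) (theta (DO C theta X))))"

text \<open>A monad is idempotent iff its multiplication is a natural isomorphism;
naturality holds for any monad, so this means every component is an iso.\<close>
definition D_idempotent ::
  "('o, 'a) cat \<Rightarrow> ('a \<Rightarrow> 'a) \<Rightarrow> ('o \<Rightarrow> 'a) \<Rightarrow> ('o \<Rightarrow> 'a) \<Rightarrow> bool" where
  "D_idempotent C TA mu theta \<longleftrightarrow> (\<forall>X \<in> Obj C. iso C (D_mult C TA mu theta X))"

end

theory Submission
  imports Defs
begin

lemma ex1_uniq: "\<exists>!x. P x \<Longrightarrow> P a \<Longrightarrow> P b \<Longrightarrow> a = b" by blast

locale mctx =
  fixes C :: "('o, 'a) cat"
    and TO :: "'o \<Rightarrow> 'o" and TA :: "'a \<Rightarrow> 'a"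
    and eta mu theta :: "'o \<Rightarrow> 'a"
  assumes monad: "monad C TO TA eta mu"
    and eqz: "\<forall>X \<in> Obj C. is_equalizer C (eta (TO X)) (TA (eta X)) (theta X)"
begin

abbreviation cmp (infixr "\<cdot>" 55) where "g \<cdot> f \<equiv> Comp C g f"
abbreviation DD where "DD X \<equiv> DO C theta X"

lemma cat: "category C" using monad by (simp add: monad_def)
lemma fnc: "endofunctor C TO TA" using monad by (simp add: monad_def)

lemma dom_obj[simp]: "f \<in> Arr C \<Longrightarrow> Dom C f \<in> Obj C"
  and cod_obj[simp]: "f \<in> Arr C \<Longrightarrow> Cod C f \<in> Obj C"
  using cat by (auto simp: category_def)

lemma arr_comp[simp]: "f \<in> Arr C \<Longrightarrow> g \<in> Arr C \<Longrightarrow> Cod C f = Dom C g \<Longrightarrow> g \<cdot> f \<in> Arr C"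
  and dom_comp[simp]: "f \<in> Arr C \<Longrightarrow> g \<in> Arr C \<Longrightarrow> Cod C f = Dom C g \<Longrightarrow> Dom C (g \<cdot> f) = Dom C f"
  and cod_comp[simp]: "f \<in> Arr C \<Longrightarrow> g \<in> Arr C \<Longrightarrow> Cod C f = Dom C g \<Longrightarrow> Cod C (g \<cdot> f) = Cod C g"
  using cat by (auto simp: category_def hom_def)

lemma assoc[simp]: "f \<in> Arr C \<Longrightarrow> g \<in> Arr C \<Longrightarrow> h \<in> Arr C \<Longrightarrow> Cod C f = Dom C g \<Longrightarrow> Cod C g = Dom C h
  \<Longrightarrow> (h \<cdot> g) \<cdot> f = h \<cdot> g \<cdot> f"
  using cat unfolding category_def by metis

lemma id_arr[simp]: "X \<in> Obj C \<Longrightarrow> Id C X \<in> Arr C"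
  and id_dom[simp]: "X \<in> Obj C \<Longrightarrow> Dom C (Id C X) = X"
  and id_cod[simp]: "X \<in> Obj C \<Longrightarrow> Cod C (Id C X) = X"
  using cat by (auto simp: category_def hom_def)

lemma id_l: "f \<in> Arr C \<Longrightarrow> Cod C f = X \<Longrightarrow> Id C X \<cdot> f = f"
  and id_r: "f \<in> Arr C \<Longrightarrow> Dom C f = X \<Longrightarrow> f \<cdot> Id C X = f"
  using cat by (auto simp: category_def)

lemma TO_obj[simp]: "X \<in> Obj C \<Longrightarrow> TO X \<in> Obj C"
  using fnc by (simp add: endofunctor_def)

lemma TA_arr[simp]: "f \<in> Arr C \<Longrightarrow> TA f \<in> Arr C"
  and TA_dom[simp]: "f \<in> Arr C \<Longrightarrow> Dom C (TA f) = TO (Dom C f)"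
  and TA_cod[simp]: "f \<in> Arr C \<Longrightarrow> Cod C (TA f) = TO (Cod C f)"
  using fnc by (auto simp: endofunctor_def hom_def)

lemma TA_comp: "f \<in> Arr C \<Longrightarrow> g \<in> Arr C \<Longrightarrow> Cod C f = Dom C g \<Longrightarrow> TA (g \<cdot> f) = TA g \<cdot> TA f"
  using fnc by (auto simp: endofunctor_def)

lemma TA_id: "X \<in> Obj C \<Longrightarrow> TA (Id C X) = Id C (TO X)"
  using fnc by (auto simp: endofunctor_def)

lemma eta_arr[simp]: "X \<in> Obj C \<Longrightarrow> eta X \<in> Arr C"
  and eta_dom[simp]: "X \<in> Obj C \<Longrightarrow> Dom C (eta X) = X"
  and eta_cod[simp]: "X \<in> Obj C \<Longrightarrow> Cod C (eta X) = TO X"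
  and mu_arr[simp]: "X \<in> Obj C \<Longrightarrow> mu X \<in> Arr C"
  and mu_dom[simp]: "X \<in> Obj C \<Longrightarrow> Dom C (mu X) = TO (TO X)"
  and mu_cod[simp]: "X \<in> Obj C \<Longrightarrow> Cod C (mu X) = TO X"
  using monad by (auto simp: monad_def hom_def)

lemma eta_nat: "f \<in> Arr C \<Longrightarrow> eta (Cod C f) \<cdot> f = TA f \<cdot> eta (Dom C f)"
  and mu_nat: "f \<in> Arr C \<Longrightarrow> mu (Cod C f) \<cdot> TA (TA f) = TA f \<cdot> mu (Dom C f)"
  and mu_eta: "X \<in> Obj C \<Longrightarrow> mu X \<cdot> eta (TO X) = Id C (TO X)"
  and mu_Teta: "X \<in> Obj C \<Longrightarrow> mu X \<cdot> TA (eta X) = Id C (TO X)"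
  using monad by (auto simp: monad_def)

lemma th_arr[simp]: "X \<in> Obj C \<Longrightarrow> theta X \<in> Arr C"
  and th_cod[simp]: "X \<in> Obj C \<Longrightarrow> Cod C (theta X) = TO X"
  and th_dom[simp]: "X \<in> Obj C \<Longrightarrow> Dom C (theta X) = DD X"
  and th_eq: "X \<in> Obj C \<Longrightarrow> eta (TO X) \<cdot> theta X = TA (eta X) \<cdot> theta X"
  using eqz by (auto simp: is_equalizer_def DO_def)

lemma DD_obj[simp]: "X \<in> Obj C \<Longrightarrow> DD X \<in> Obj C"
  by (metis th_arr th_dom dom_obj)

lemma eq_univ: assumes X: "X \<in> Obj C" and h: "h \<in> Arr C" and ch: "Cod C h = TO X"
    and eq: "eta (TO X) \<cdot> h = TA (eta X) \<cdot> h"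
  shows "\<exists>!k. k \<in> hom C (Dom C h) (DD X) \<and> theta X \<cdot> k = h"
proof -
  have E: "is_equalizer C (eta (TO X)) (TA (eta X)) (theta X)" using eqz X by blast
  have U: "\<forall>h \<in> Arr C. Cod C h = Dom C (eta (TO X)) \<longrightarrow> eta (TO X) \<cdot> h = TA (eta X) \<cdot> h \<longrightarrow>
        (\<exists>!k. k \<in> hom C (Dom C h) (Dom C (theta X)) \<and> theta X \<cdot> k = h)"
    using E unfolding is_equalizer_def by (elim conjE)
  have c: "Cod C h = Dom C (eta (TO X))" using X ch by simp
  have "\<exists>!k. k \<in> hom C (Dom C h) (Dom C (theta X)) \<and> theta X \<cdot> k = h"
    using U h c eq by blast
  then show ?thesis using X by simp
qed

lemma th_mono: "X \<in> Obj C \<Longrightarrow> g \<in> Arr C \<Longrightarrow> h \<in> Arr C \<Longrightarrow> Cod C g = DD X \<Longrightarrow> Cod C h = DD X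
   \<Longrightarrow> Dom C g = Dom C h \<Longrightarrow> theta X \<cdot> g = theta X \<cdot> h \<Longrightarrow> g = h"
proof -
  assume X: "X \<in> Obj C" and g: "g \<in> Arr C" and h: "h \<in> Arr C" and cg: "Cod C g = DD X"
    and ch: "Cod C h = DD X" and d: "Dom C g = Dom C h" and e: "theta X \<cdot> g = theta X \<cdot> h"
  let ?h = "theta X \<cdot> g"
  have a: "?h \<in> Arr C" "Cod C ?h = TO X" using X g cg by auto
  have b: "eta (TO X) \<cdot> ?h = TA (eta X) \<cdot> ?h"
    using X g cg th_eq[OF X] assoc[of g "theta X" "eta (TO X)"] assoc[of g "theta X" "TA (eta X)"] by simp
  have U: "\<exists>!k. k \<in> hom C (Dom C ?h) (DD X) \<and> theta X \<cdot> k = ?h"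
    by (rule eq_univ[OF X a b])
  have G: "g \<in> hom C (Dom C ?h) (DD X) \<and> theta X \<cdot> g = ?h" using X g cg by (simp add: hom_def)
  have H: "h \<in> hom C (Dom C ?h) (DD X) \<and> theta X \<cdot> h = ?h" using X g h cg ch d e by (simp add: hom_def)
  show "g = h" using ex1_uniq[OF U G H] .
qed

lemma lift:
  assumes X: "X \<in> Obj C" and h: "h \<in> Arr C" and ch: "Cod C h = TO X"
    and eq: "eta (TO X) \<cdot> h = TA (eta X) \<cdot> h" and A: "A = Dom C h"
  defines "k \<equiv> THE k. k \<in> hom C A (DD X) \<and> theta X \<cdot> k = h"
  shows "k \<in> Arr C \<and> Dom C k = A \<and> Cod C k = DD X \<and> theta X \<cdot> k = h"
proof -
  have "\<exists>!k. k \<in> hom C A (DD X) \<and> theta X \<cdot> k = h" using eq_univ[OF X h ch eq] A by simp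
  then have "k \<in> hom C A (DD X) \<and> theta X \<cdot> k = h" unfolding k_def by (rule theI')
  then show ?thesis unfolding hom_def by simp
qed

lemma rew: "p \<cdot> q = r \<cdot> s \<Longrightarrow> p \<in> Arr C \<Longrightarrow> q \<in> Arr C \<Longrightarrow> r \<in> Arr C \<Longrightarrow> s \<in> Arr C \<Longrightarrow> k \<in> Arr C
  \<Longrightarrow> Cod C q = Dom C p \<Longrightarrow> Cod C s = Dom C r \<Longrightarrow> Cod C k = Dom C q \<Longrightarrow> Cod C k = Dom C s
  \<Longrightarrow> p \<cdot> q \<cdot> k = r \<cdot> s \<cdot> k"
  by (metis assoc)

lemma rew_id: "p \<cdot> q = Id C Y \<Longrightarrow> p \<in> Arr C \<Longrightarrow> q \<in> Arr C \<Longrightarrow> k \<in> Arr C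
  \<Longrightarrow> Cod C q = Dom C p \<Longrightarrow> Cod C k = Dom C q \<Longrightarrow> Cod C k = Y
  \<Longrightarrow> p \<cdot> q \<cdot> k = k"
  by (metis assoc id_l)

lemma rew1: "p \<cdot> q = r \<Longrightarrow> p \<in> Arr C \<Longrightarrow> q \<in> Arr C \<Longrightarrow> k \<in> Arr C
  \<Longrightarrow> Cod C q = Dom C p \<Longrightarrow> Cod C k = Dom C q \<Longrightarrow> p \<cdot> q \<cdot> k = r \<cdot> k"
  using assoc[of k q p] by simp

abbreviation ee where "ee X \<equiv> D_unit C eta theta X"
abbreviation mm where "mm X \<equiv> D_mult C TA mu theta X"

lemma e_props: assumes X: "X \<in> Obj C"
  shows "ee X \<in> Arr C \<and> Dom C (ee X) = X \<and> Cod C (ee X) = DD X \<and> theta X \<cdot> ee X = eta X"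
  unfolding D_unit_def using lift[OF X eta_arr[OF X] eta_cod[OF X] _ eta_dom[OF X, symmetric]]
    eta_nat[OF eta_arr[OF X]] X by simp

lemma a_props: assumes X: "X \<in> Obj C"
  shows "eta (TO (TO X)) \<cdot> TA (theta X) \<cdot> theta (DD X) = TA (eta (TO X)) \<cdot> TA (theta X) \<cdot> theta (DD X)"
    and "TA (eta (TO X)) \<cdot> TA (theta X) \<cdot> theta (DD X) = TA (TA (eta X)) \<cdot> TA (theta X) \<cdot> theta (DD X)"
    and "eta (TO X) \<cdot> mu X \<cdot> TA (theta X) \<cdot> theta (DD X) = TA (theta X) \<cdot> theta (DD X)"
    and "TA (eta X) \<cdot> mu X \<cdot> TA (theta X) \<cdot> theta (DD X) = TA (theta X) \<cdot> theta (DD X)"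
proof -
  have D: "DD X \<in> Obj C" using X by simp
  have n1: "eta (TO X) \<cdot> theta X = TA (theta X) \<cdot> eta (DD X)"
    using eta_nat[OF th_arr[OF X]] X by simp
  have n2: "TA (eta (TO X)) \<cdot> TA (theta X) = TA (TA (theta X)) \<cdot> TA (eta (DD X))"
    using n1 X TA_comp[of "theta X" "eta (TO X)"] TA_comp[of "eta (DD X)" "TA (theta X)"] by simp
  have n3: "eta (TO (TO X)) \<cdot> TA (theta X) = TA (TA (theta X)) \<cdot> eta (TO (DD X))"
    using eta_nat[OF TA_arr[OF th_arr[OF X]]] X by simp
  show i: "eta (TO (TO X)) \<cdot> TA (theta X) \<cdot> theta (DD X) = TA (eta (TO X)) \<cdot> TA (theta X) \<cdot> theta (DD X)"
  proof -
    have "eta (TO (TO X)) \<cdot> TA (theta X) \<cdot> theta (DD X) = TA (TA (theta X)) \<cdot> eta (TO (DD X)) \<cdot> theta (DD X)"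
      by (rule rew[OF n3]) (use X in simp_all)
    also have "\<dots> = TA (TA (theta X)) \<cdot> TA (eta (DD X)) \<cdot> theta (DD X)"
      using th_eq[OF D] by simp
    also have "\<dots> = TA (eta (TO X)) \<cdot> TA (theta X) \<cdot> theta (DD X)"
      by (rule rew[OF n2[symmetric]]) (use X in simp_all)
    finally show ?thesis .
  qed
  have n4: "TA (eta (TO X)) \<cdot> TA (theta X) = TA (TA (eta X)) \<cdot> TA (theta X)"
    using th_eq[OF X] X TA_comp[of "theta X" "eta (TO X)"] TA_comp[of "theta X" "TA (eta X)"] by simp
  show ii: "TA (eta (TO X)) \<cdot> TA (theta X) \<cdot> theta (DD X) = TA (TA (eta X)) \<cdot> TA (theta X) \<cdot> theta (DD X)"
    by (rule rew[OF n4]) (use X in simp_all)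
  have n5: "eta (TO X) \<cdot> mu X = TA (mu X) \<cdot> eta (TO (TO X))"
    using eta_nat[OF mu_arr[OF X]] X by simp
  have n6: "TA (mu X) \<cdot> TA (eta (TO X)) = Id C (TO (TO X))"
    using X TA_comp[of "eta (TO X)" "mu X"] mu_eta[OF X] TA_id by simp
  show "eta (TO X) \<cdot> mu X \<cdot> TA (theta X) \<cdot> theta (DD X) = TA (theta X) \<cdot> theta (DD X)"
  proof -
    have "eta (TO X) \<cdot> mu X \<cdot> TA (theta X) \<cdot> theta (DD X) = TA (mu X) \<cdot> eta (TO (TO X)) \<cdot> TA (theta X) \<cdot> theta (DD X)"
      by (rule rew[OF n5]) (use X in simp_all)
    also have "\<dots> = TA (mu X) \<cdot> TA (eta (TO X)) \<cdot> TA (theta X) \<cdot> theta (DD X)"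
      using i by simp
    also have "\<dots> = TA (theta X) \<cdot> theta (DD X)"
      by (rule rew_id[OF n6]) (use X in simp_all)
    finally show ?thesis .
  qed
  have n7: "TA (eta X) \<cdot> mu X = mu (TO X) \<cdot> TA (TA (eta X))"
    using mu_nat[OF eta_arr[OF X]] X by simp
  show "TA (eta X) \<cdot> mu X \<cdot> TA (theta X) \<cdot> theta (DD X) = TA (theta X) \<cdot> theta (DD X)"
  proof -
    have "TA (eta X) \<cdot> mu X \<cdot> TA (theta X) \<cdot> theta (DD X) = mu (TO X) \<cdot> TA (TA (eta X)) \<cdot> TA (theta X) \<cdot> theta (DD X)"
      by (rule rew[OF n7]) (use X in simp_all)
    also have "\<dots> = mu (TO X) \<cdot> TA (eta (TO X)) \<cdot> TA (theta X) \<cdot> theta (DD X)"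
      using ii by simp
    also have "\<dots> = TA (theta X) \<cdot> theta (DD X)"
      by (rule rew_id[OF mu_Teta]) (use X in simp_all)
    finally show ?thesis .
  qed
qed

lemma m_props: assumes X: "X \<in> Obj C"
  shows "mm X \<in> Arr C \<and> Dom C (mm X) = DD (DD X) \<and> Cod C (mm X) = DD X \<and>
         theta X \<cdot> mm X = mu X \<cdot> TA (theta X) \<cdot> theta (DD X)"
proof -
  let ?h = "mu X \<cdot> TA (theta X) \<cdot> theta (DD X)"
  have h: "?h \<in> Arr C" "Cod C ?h = TO X" "Dom C ?h = DD (DD X)" using X by simp_all
  have eq: "eta (TO X) \<cdot> ?h = TA (eta X) \<cdot> ?h" using a_props(3,4)[OF X] by simp
  show ?thesis unfolding D_mult_def using lift[OF X h(1) h(2) eq h(3)[symmetric]] by simp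
qed

lemma me: assumes X: "X \<in> Obj C" shows "mm X \<cdot> ee (DD X) = Id C (DD X)"
proof -
  have D: "DD X \<in> Obj C" using X by simp
  note m = m_props[OF X] and e = e_props[OF D]
  have n1: "eta (TO X) \<cdot> theta X = TA (theta X) \<cdot> eta (DD X)"
    using eta_nat[OF th_arr[OF X]] X by simp
  have meq: "theta X \<cdot> mm X = mu X \<cdot> TA (theta X) \<cdot> theta (DD X)" using m by blast
  have mt: "mm X \<in> Arr C" "Dom C (mm X) = DD (DD X)" "Cod C (mm X) = DD X" using m_props[OF X] by auto
  have ft: "ee (DD X) \<in> Arr C" "Dom C (ee (DD X)) = DD X" "Cod C (ee (DD X)) = DD (DD X)" using e by auto
  have "theta X \<cdot> mm X \<cdot> ee (DD X) = (theta X \<cdot> mm X) \<cdot> ee (DD X)" using mt ft X by simp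
  also have "\<dots> = (mu X \<cdot> TA (theta X) \<cdot> theta (DD X)) \<cdot> ee (DD X)" by (simp only: meq)
  also have "\<dots> = mu X \<cdot> TA (theta X) \<cdot> theta (DD X) \<cdot> ee (DD X)" using mt ft X by simp
  also have "\<dots> = mu X \<cdot> TA (theta X) \<cdot> eta (DD X)" using e by simp
  finally have "theta X \<cdot> mm X \<cdot> ee (DD X) = mu X \<cdot> TA (theta X) \<cdot> eta (DD X)" .
  also have "\<dots> = mu X \<cdot> eta (TO X) \<cdot> theta X" using n1 by simp
  also have "\<dots> = theta X" by (rule rew_id[OF mu_eta[OF X]]) (use X in simp_all)
  also have "\<dots> = theta X \<cdot> Id C (DD X)" using X by (simp add: id_r)
  finally have c: "theta X \<cdot> mm X \<cdot> ee (DD X) = theta X \<cdot> Id C (DD X)" .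
  show ?thesis by (rule th_mono[OF X _ _ _ _ _ c]) (use mt ft X in simp_all)
qed

definition kk where "kk X = (THE k. k \<in> hom C (DD X) (DD (DD X)) \<and> theta (DD X) \<cdot> k = TA (ee X) \<cdot> theta X)"

lemma k_props: assumes X: "X \<in> Obj C"
  shows "kk X \<in> Arr C \<and> Dom C (kk X) = DD X \<and> Cod C (kk X) = DD (DD X) \<and>
         theta (DD X) \<cdot> kk X = TA (ee X) \<cdot> theta X"
proof -
  have D: "DD X \<in> Obj C" using X by simp
  note e = e_props[OF X]
  let ?h = "TA (ee X) \<cdot> theta X"
  have h: "?h \<in> Arr C" "Cod C ?h = TO (DD X)" "Dom C ?h = DD X" using X e by simp_all
  have n1: "eta (TO (DD X)) \<cdot> TA (ee X) = TA (TA (ee X)) \<cdot> eta (TO X)"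
    using eta_nat[OF TA_arr, of "ee X"] e by simp
  have n2: "TA (TA (ee X)) \<cdot> TA (eta X) = TA (eta (DD X)) \<cdot> TA (ee X)"
  proof -
    have "eta (DD X) \<cdot> ee X = TA (ee X) \<cdot> eta X" using eta_nat[of "ee X"] e by simp
    then show ?thesis using TA_comp[of "eta X" "TA (ee X)"] TA_comp[of "ee X" "eta (DD X)"] e X by simp
  qed
  have eq: "eta (TO (DD X)) \<cdot> ?h = TA (eta (DD X)) \<cdot> ?h"
  proof -
    have "eta (TO (DD X)) \<cdot> ?h = TA (TA (ee X)) \<cdot> eta (TO X) \<cdot> theta X"
      by (rule rew[OF n1]) (use X e in simp_all)
    also have "\<dots> = TA (TA (ee X)) \<cdot> TA (eta X) \<cdot> theta X" using th_eq[OF X] by simp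
    also have "\<dots> = TA (eta (DD X)) \<cdot> ?h"
      by (rule rew[OF n2]) (use X e in simp_all)
    finally show ?thesis .
  qed
  show ?thesis unfolding kk_def using lift[OF D h(1) h(2) eq h(3)[symmetric]] by simp
qed

lemma mk: assumes X: "X \<in> Obj C" shows "mm X \<cdot> kk X = Id C (DD X)"
proof -
  note m = m_props[OF X] and e = e_props[OF X] and k = k_props[OF X]
  have n: "TA (theta X) \<cdot> TA (ee X) = TA (eta X)"
    using TA_comp[of "ee X" "theta X"] e X by simp
  have meq: "theta X \<cdot> mm X = mu X \<cdot> TA (theta X) \<cdot> theta (DD X)" using m by blast
  have mt: "mm X \<in> Arr C" "Dom C (mm X) = DD (DD X)" "Cod C (mm X) = DD X" using m_props[OF X] by auto
  have ft: "kk X \<in> Arr C" "Dom C (kk X) = DD X" "Cod C (kk X) = DD (DD X)" using k by auto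
  have "theta X \<cdot> mm X \<cdot> kk X = (theta X \<cdot> mm X) \<cdot> kk X" using mt ft X by simp
  also have "\<dots> = (mu X \<cdot> TA (theta X) \<cdot> theta (DD X)) \<cdot> kk X" by (simp only: meq)
  also have "\<dots> = mu X \<cdot> TA (theta X) \<cdot> theta (DD X) \<cdot> kk X" using mt ft X by simp
  also have "\<dots> = mu X \<cdot> TA (theta X) \<cdot> TA (ee X) \<cdot> theta X" using k by simp
  finally have "theta X \<cdot> mm X \<cdot> kk X = mu X \<cdot> TA (theta X) \<cdot> TA (ee X) \<cdot> theta X" .
  also have "\<dots> = mu X \<cdot> TA (eta X) \<cdot> theta X"
    using rew1[OF n, of "theta X"] e X by simp
  also have "\<dots> = theta X" by (rule rew_id[OF mu_Teta[OF X]]) (use X in simp_all)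
  also have "\<dots> = theta X \<cdot> Id C (DD X)" using X by (simp add: id_r)
  finally have c: "theta X \<cdot> mm X \<cdot> kk X = theta X \<cdot> Id C (DD X)" .
  show ?thesis by (rule th_mono[OF X _ _ _ _ _ c]) (use mt ft X in simp_all)
qed

lemma idem_if: assumes X: "X \<in> Obj C" and M: "mono C (TA (theta X))"
  shows "iso C (mm X)"
proof -
  have D: "DD X \<in> Obj C" using X by simp
  note e = e_props[OF D]
  have meq: "theta X \<cdot> mm X = mu X \<cdot> TA (theta X) \<cdot> theta (DD X)" using m_props[OF X] by blast
  have mt: "mm X \<in> Arr C" "Dom C (mm X) = DD (DD X)" "Cod C (mm X) = DD X" using m_props[OF X] by auto
  have ft: "ee (DD X) \<in> Arr C" "Dom C (ee (DD X)) = DD X" "Cod C (ee (DD X)) = DD (DD X)"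
    and eeq: "theta (DD X) \<cdot> ee (DD X) = eta (DD X)" using e by auto
  have n1: "TA (theta X) \<cdot> eta (DD X) = eta (TO X) \<cdot> theta X"
    using eta_nat[OF th_arr[OF X]] X by simp
  have s1: "TA (theta X) \<cdot> eta (DD X) \<cdot> mm X = TA (theta X) \<cdot> theta (DD X)"
  proof -
    have "TA (theta X) \<cdot> eta (DD X) \<cdot> mm X = eta (TO X) \<cdot> theta X \<cdot> mm X"
      by (rule rew[OF n1]) (use X mt in simp_all)
    also have "\<dots> = eta (TO X) \<cdot> mu X \<cdot> TA (theta X) \<cdot> theta (DD X)" by (simp only: meq)
    also have "\<dots> = TA (theta X) \<cdot> theta (DD X)" by (rule a_props(3)[OF X])
    finally show ?thesis .
  qed
  have s2: "eta (DD X) \<cdot> mm X = theta (DD X)"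
    using M unfolding mono_def
  proof (elim conjE)
    assume U: "\<forall>g\<in>Arr C. \<forall>h\<in>Arr C. Cod C g = Dom C (TA (theta X)) \<longrightarrow> Cod C h = Dom C (TA (theta X)) \<longrightarrow>
        Dom C g = Dom C h \<longrightarrow> TA (theta X) \<cdot> g = TA (theta X) \<cdot> h \<longrightarrow> g = h"
    have "eta (DD X) \<cdot> mm X \<in> Arr C" "theta (DD X) \<in> Arr C" using X mt by simp_all
    moreover have "Cod C (eta (DD X) \<cdot> mm X) = Dom C (TA (theta X))"
      "Cod C (theta (DD X)) = Dom C (TA (theta X))"
      "Dom C (eta (DD X) \<cdot> mm X) = Dom C (theta (DD X))" using X mt by simp_all
    ultimately show ?thesis using U s1 by blast
  qed
  have "theta (DD X) \<cdot> ee (DD X) \<cdot> mm X = (theta (DD X) \<cdot> ee (DD X)) \<cdot> mm X" using X mt ft by simp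
  also have "\<dots> = theta (DD X)" using eeq s2 by simp
  also have "\<dots> = theta (DD X) \<cdot> Id C (DD (DD X))" using X by (simp add: id_r)
  finally have c: "theta (DD X) \<cdot> ee (DD X) \<cdot> mm X = theta (DD X) \<cdot> Id C (DD (DD X))" .
  have inv1: "ee (DD X) \<cdot> mm X = Id C (DD (DD X))"
    by (rule th_mono[OF D _ _ _ _ _ c]) (use mt ft X in simp_all)
  have inv2: "mm X \<cdot> ee (DD X) = Id C (DD X)" by (rule me[OF X])
  show ?thesis unfolding iso_def hom_def using mt ft inv1 inv2 by auto
qed

lemma idem_only_if: assumes X: "X \<in> Obj C" and I: "iso C (mm X)"
  shows "mono C (TA (theta X))"
proof -
  have D: "DD X \<in> Obj C" using X by simp
  have mt: "mm X \<in> Arr C" "Dom C (mm X) = DD (DD X)" "Cod C (mm X) = DD X" using m_props[OF X] by auto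
  have ft: "ee (DD X) \<in> Arr C" "Dom C (ee (DD X)) = DD X" "Cod C (ee (DD X)) = DD (DD X)"
    and eeq: "theta (DD X) \<cdot> ee (DD X) = eta (DD X)" using e_props[OF D] by auto
  have kt: "kk X \<in> Arr C" "Dom C (kk X) = DD X" "Cod C (kk X) = DD (DD X)"
    and keq: "theta (DD X) \<cdot> kk X = TA (ee X) \<cdot> theta X" using k_props[OF X] by auto
  have et: "ee X \<in> Arr C" "Dom C (ee X) = X" "Cod C (ee X) = DD X"
    and eeq1: "theta X \<cdot> ee X = eta X" using e_props[OF X] by auto
  obtain n where nt: "n \<in> Arr C" "Dom C n = DD X" "Cod C n = DD (DD X)"
    and n1: "n \<cdot> mm X = Id C (DD (DD X))" and n2: "mm X \<cdot> n = Id C (DD X)"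
    using I mt unfolding iso_def hom_def by auto
  have "ee (DD X) = Id C (DD (DD X)) \<cdot> ee (DD X)" using ft D by (simp add: id_l)
  also have "\<dots> = (n \<cdot> mm X) \<cdot> ee (DD X)" using n1 by simp
  also have "\<dots> = n \<cdot> Id C (DD X)" using nt mt ft me[OF X] by simp
  also have "\<dots> = n" using nt by (simp add: id_r)
  finally have en: "ee (DD X) = n" .
  have "kk X = Id C (DD (DD X)) \<cdot> kk X" using kt D by (simp add: id_l)
  also have "\<dots> = (n \<cdot> mm X) \<cdot> kk X" using n1 by simp
  also have "\<dots> = n \<cdot> Id C (DD X)" using nt mt kt mk[OF X] by simp
  also have "\<dots> = n" using nt by (simp add: id_r)
  finally have kn: "kk X = n" .
  have etaD: "eta (DD X) = TA (ee X) \<cdot> theta X" using eeq keq en kn by simp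
  let ?r = "mu (DD X) \<cdot> TA (TA (ee X))"
  have r1: "TA (TA (ee X)) \<cdot> TA (theta X) = TA (eta (DD X))"
    using TA_comp[of "theta X" "TA (ee X)"] etaD X et by simp
  have r2: "mu (DD X) \<cdot> TA (eta (DD X)) = Id C (TO (DD X))" by (rule mu_Teta[OF D])
  have rinv: "\<And>g. g \<in> Arr C \<Longrightarrow> Cod C g = TO (DD X) \<Longrightarrow> ?r \<cdot> TA (theta X) \<cdot> g = g"
  proof -
    fix g assume g: "g \<in> Arr C" "Cod C g = TO (DD X)"
    have "?r \<cdot> TA (theta X) \<cdot> g = mu (DD X) \<cdot> TA (TA (ee X)) \<cdot> TA (theta X) \<cdot> g"
      using g X D et by simp
    also have "\<dots> = mu (DD X) \<cdot> TA (eta (DD X)) \<cdot> g"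
      using rew1[OF r1, of g] g X et by simp
    also have "\<dots> = g" by (rule rew_id[OF r2]) (use g D in simp_all)
    finally show "?r \<cdot> TA (theta X) \<cdot> g = g" .
  qed
  show ?thesis unfolding mono_def
  proof (intro conjI ballI impI)
    show "TA (theta X) \<in> Arr C" using X by simp
    fix g h assume g: "g \<in> Arr C" and h: "h \<in> Arr C" and cg: "Cod C g = Dom C (TA (theta X))"
      and ch: "Cod C h = Dom C (TA (theta X))" and "Dom C g = Dom C h"
      and eq: "TA (theta X) \<cdot> g = TA (theta X) \<cdot> h"
    have cg': "Cod C g = TO (DD X)" and ch': "Cod C h = TO (DD X)" using cg ch X by simp_all
    have "g = ?r \<cdot> TA (theta X) \<cdot> g" using rinv[OF g cg'] by simp
    also have "\<dots> = ?r \<cdot> TA (theta X) \<cdot> h" using eq by simp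
    also have "\<dots> = h" using rinv[OF h ch'] by simp
    finally show "g = h" .
  qed
qed

end

theorem lemma5p7:
  fixes C :: "('o, 'a) cat"
    and TO :: "'o \<Rightarrow> 'o" and TA :: "'a \<Rightarrow> 'a"
    and eta mu theta :: "'o \<Rightarrow> 'a"
  assumes "monad C TO TA eta mu"
    and "\<forall>X \<in> Obj C. is_equalizer C (eta (TO X)) (TA (eta X)) (theta X)"
  shows "(D_idempotent C TA mu theta \<longleftrightarrow> (\<forall>X \<in> Obj C. mono C (TA (theta X))))
       \<and> ((\<forall>e. regular_mono C e \<longrightarrow> mono C (TA e)) \<longrightarrow> D_idempotent C TA mu theta)"
proof -
  interpret mctx C TO TA eta mu theta using assms by (unfold_locales) auto
  have A: "D_idempotent C TA mu theta \<longleftrightarrow> (\<forall>X \<in> Obj C. mono C (TA (theta X)))"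
    unfolding D_idempotent_def using idem_if idem_only_if by blast
  have B: "(\<forall>e. regular_mono C e \<longrightarrow> mono C (TA e)) \<longrightarrow> D_idempotent C TA mu theta"
  proof
    assume R: "\<forall>e. regular_mono C e \<longrightarrow> mono C (TA e)"
    have "\<forall>X \<in> Obj C. mono C (TA (theta X))"
    proof
      fix X assume X: "X \<in> Obj C"
      have "regular_mono C (theta X)" unfolding regular_mono_def using eqz X by blast
      then show "mono C (TA (theta X))" using R by blast
    qed
    then show "D_idempotent C TA mu theta" using A by blast
  qed
  show ?thesis using A B by blast
qed

end
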